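(* Let $L$ be a finite distributive lattice, let $m$ be the maximum size of an antichain in $\operatorname{Mi}(L)$, and put $Q_L(x)=\sum_{k=0}^m q_k(L)x^k$ and $D_L^-(x)=\sum_{k=0}^m d_k^-(L)x^k$. Then $$Q_L(-1)=q_0(L)-q_1(L)+q_2(L)-q_3(L)+\cdots=D_L^-(0)=1,$$ and $$\left.\frac{\mathrm{d}Q_L(x)}{\mathrm{d}x}\right|_{x=-1}=\left.\frac{\mathrm{d}D_L^-(x)}{\mathrm{d}x}\right|_{x=0}=d_1^-(L)=|\operatorname{Mi}(L)|.$$
   Context: $\operatorname{Mi}(L)$ is the set of meet-irreducible elements of $L$, as a poset under the order of $L$. For a finite lattice $M$ and $k\ge0$, $q_k(M)$ is the number of convex sublattices (intervals) of $M$ isomorphic to the Boolean lattice $\mathbf{B}_k$ with $2^k$ elements. For $a\in M$, $\deg^-_M(a)$ is the number of elements of $M$ covering $a$, and $d_k^-(M)$ is the number of $a\in M$ with $\deg^-_M(a)=k$. *)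

theory Defs
  imports "HOL-Computational_Algebra.Polynomial"
begin

definition meet_irreducible :: "'a::lattice \<Rightarrow> bool" where
  "meet_irreducible a \<longleftrightarrow> (\<exists>b. \<not> b \<le> a) \<and> (\<forall>x y. a = inf x y \<longrightarrow> a = x \<or> a = y)"

definition Mi :: "'a::lattice set" where
  "Mi = {a. meet_irreducible a}"

definition antichain_in :: "'a::order set \<Rightarrow> bool" where
  "antichain_in A \<longleftrightarrow> (\<forall>x\<in>A. \<forall>y\<in>A. x \<le> y \<longrightarrow> x = y)"

definition max_antichain_Mi :: "'a::{finite,lattice} itself \<Rightarrow> nat" where
  "max_antichain_Mi _ = Max {card A | A :: 'a set. A \<subseteq> Mi \<and> antichain_in A}"

definition iso_boolean :: "'a::order set \<Rightarrow> nat \<Rightarrow> bool" where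
  "iso_boolean S k \<longleftrightarrow> (\<exists>f. bij_betw f S (Pow {..<k}) \<and>
      (\<forall>x\<in>S. \<forall>y\<in>S. x \<le> y \<longleftrightarrow> f x \<subseteq> f y))"

definition q :: "'a::{finite,lattice} itself \<Rightarrow> nat \<Rightarrow> nat" where
  "q _ k = card {S :: 'a set. (\<exists>a b. a \<le> b \<and> S = {a..b}) \<and> iso_boolean S k}"

definition covers :: "'a::order \<Rightarrow> 'a \<Rightarrow> bool" where
  "covers a b \<longleftrightarrow> a < b \<and> \<not> (\<exists>c. a < c \<and> c < b)"   (* b covers a *)

definition deg_down :: "'a::{finite,order} \<Rightarrow> nat" where
  "deg_down a = card {b. covers a b}"

definition d_down :: "'a::{finite,order} itself \<Rightarrow> nat \<Rightarrow> nat" where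
  "d_down _ k = card {a :: 'a. deg_down a = k}"

definition Q_poly :: "'a::{finite,lattice} itself \<Rightarrow> int poly" where
  "Q_poly L = (\<Sum>k\<le>max_antichain_Mi L. monom (int (q L k)) k)"

definition D_poly :: "'a::{finite,lattice} itself \<Rightarrow> int poly" where
  "D_poly L = (\<Sum>k\<le>max_antichain_Mi L. monom (int (d_down L k)) k)"

end

theory Submission
  imports Defs
begin


abbreviation uc :: "'a::order \<Rightarrow> 'a set" where "uc a \<equiv> {b. covers a b}"

definition J :: "'a::lattice \<Rightarrow> 'a set \<Rightarrow> 'a" where
  "J a T = Sup_fin (insert a T)"

lemma cover_inf:
  fixes a :: "'a::lattice"
  assumes "covers a c" "a \<le> x" shows "inf x c = a \<or> c \<le> x"
proof -
  have "a \<le> inf x c" "inf x c \<le> c" using assms unfolding covers_def by auto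
  then show ?thesis using assms unfolding covers_def
    by (metis inf.absorb_iff2 inf.commute order.not_eq_order_implies_strict)
qed

lemma covers_distinct_inf:
  fixes a :: "'a::lattice"
  assumes "covers a c" "covers a c'" "c \<noteq> c'" shows "inf c c' = a"
proof -
  have "inf c c' = a \<or> c' \<le> c" using cover_inf[OF assms(2), of c] assms(1) unfolding covers_def by auto
  moreover have "\<not> c' \<le> c" using assms unfolding covers_def
    by (metis order.order_iff_strict)
  ultimately show ?thesis by auto
qed

lemma J_ge: "finite T \<Longrightarrow> (a::'a::lattice) \<le> J a T" "finite T \<Longrightarrow> t \<in> T \<Longrightarrow> t \<le> J a T"
  unfolding J_def by (auto intro: Sup_fin.coboundedI)

lemma J_le: "finite T \<Longrightarrow> (a::'a::lattice) \<le> b \<Longrightarrow> (\<forall>t\<in>T. t \<le> b) \<Longrightarrow> J a T \<le> b"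
  unfolding J_def by (auto intro: Sup_fin.boundedI)

lemma J_empty: "J a {} = a" unfolding J_def by simp

lemma inf_J:
  fixes a :: "'a::distrib_lattice"
  assumes "finite T"
  shows "inf x (J a T) = J (inf x a) (inf x ` T)"
  unfolding J_def using inf_Sup1_distrib[of "insert a T" x] assms
  by (simp add: image_def) (rule arg_cong[where f=Sup_fin], blast)

lemma decomp:
  fixes a :: "'a::{finite,distrib_lattice}"
  assumes "T \<subseteq> uc a" "a \<le> x" "x \<le> J a T"
  shows "x = J a {c\<in>T. c \<le> x}"
proof -
  have "x = inf x (J a T)" using assms by (simp add: inf.absorb1)
  also have "\<dots> = J a (inf x ` T)" using inf_J[of T x a] assms by (simp add: inf.absorb2)
  also have "insert a (inf x ` T) = insert a {c\<in>T. c \<le> x}"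
  proof
    show "insert a (inf x ` T) \<subseteq> insert a {c\<in>T. c \<le> x}"
    proof
      fix y assume "y \<in> insert a (inf x ` T)"
      then show "y \<in> insert a {c\<in>T. c \<le> x}"
      proof
        assume "y \<in> inf x ` T"
        then obtain c where c: "c \<in> T" "y = inf x c" by auto
        then have "inf x c = a \<or> c \<le> x" using cover_inf[of a c x] assms by auto
        then show ?thesis using c by (auto simp: inf.absorb2)
      qed auto
    qed
    show "insert a {c\<in>T. c \<le> x} \<subseteq> insert a (inf x ` T)"
      by (auto simp: image_def inf.absorb2 intro!: bexI)
  qed
  then have "J a (inf x ` T) = J a {c\<in>T. c \<le> x}" unfolding J_def by simp
  finally show ?thesis .
qed

lemma sub_recover:
  fixes a :: "'a::{finite,distrib_lattice}"
  assumes "T' \<subseteq> T" "T \<subseteq> uc a"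
  shows "{c\<in>T. c \<le> J a T'} = T'"
proof
  show "T' \<subseteq> {c\<in>T. c \<le> J a T'}" using assms by (auto intro!: J_ge)
  show "{c\<in>T. c \<le> J a T'} \<subseteq> T'"
  proof (rule ccontr)
    assume "\<not> ?thesis"
    then obtain c where c: "c \<in> T" "c \<le> J a T'" "c \<notin> T'" by auto
    have ca: "inf c a = a" using c assms unfolding covers_def by (auto simp: inf.absorb2)
    have "inf c ` T' \<subseteq> {a}" using covers_distinct_inf[of a c] c assms by auto
    then have ins: "insert a (inf c ` T') = {a}" by auto
    have "c = inf c (J a T')" using c by (simp add: inf.absorb1)
    also have "\<dots> = J (inf c a) (inf c ` T')" by (rule inf_J) simp
    also have "\<dots> = a" unfolding ca J_def ins by simp
    finally show False using c assms unfolding covers_def by auto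
  qed
qed

lemma covers_below_J:
  fixes a :: "'a::{finite,distrib_lattice}"
  assumes "T \<subseteq> uc a"
  shows "{c. covers a c \<and> c \<le> J a T} = T"
proof
  show "T \<subseteq> {c. covers a c \<and> c \<le> J a T}" using assms by (auto intro!: J_ge)
  show "{c. covers a c \<and> c \<le> J a T} \<subseteq> T"
  proof
    fix c assume c: "c \<in> {c. covers a c \<and> c \<le> J a T}"
    then have ac: "a < c" unfolding covers_def by auto
    have e: "c = J a {t\<in>T. t \<le> c}" using decomp[OF assms, of c] c ac by auto
    then have "{t\<in>T. t \<le> c} \<noteq> {}" using ac J_empty by (metis less_irrefl)
    then obtain t where t: "t \<in> T" "t \<le> c" by auto
    then have "a < t" using assms unfolding covers_def by auto
    then have "t = c" using t c unfolding covers_def by (auto simp: order.order_iff_strict)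
    then show "c \<in> T" using t by simp
  qed
qed



lemma J_mono:
  fixes a :: "'a::{finite,lattice}"
  shows "X \<subseteq> Y \<Longrightarrow> J a X \<le> J a Y"
  by (rule J_le) (auto intro: J_ge)

lemma interval_boolean:
  fixes a :: "'a::{finite,distrib_lattice}"
  assumes T: "T \<subseteq> uc a"
  shows "iso_boolean {a..J a T} (card T)"
proof -
  obtain h where h: "bij_betw h T {..<card T}"
    using ex_bij_betw_finite_nat[of T] by (auto simp: atLeast0LessThan)
  define g where "g x = {c\<in>T. c \<le> x}" for x
  have g_bij: "bij_betw g {a..J a T} (Pow T)"
  proof (rule bij_betw_imageI)
    show "inj_on g {a..J a T}"
    proof (rule inj_onI)
      fix x y assume "x \<in> {a..J a T}" "y \<in> {a..J a T}" "g x = g y"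
      then show "x = y" using decomp[OF T, of x] decomp[OF T, of y] unfolding g_def by auto
    qed
    show "g ` {a..J a T} = Pow T"
    proof
      show "g ` {a..J a T} \<subseteq> Pow T" unfolding g_def by auto
      show "Pow T \<subseteq> g ` {a..J a T}"
      proof
        fix T' assume "T' \<in> Pow T"
        then have "T' \<subseteq> T" by auto
        then have "g (J a T') = T'" "J a T' \<in> {a..J a T}"
          using sub_recover[OF _ T, of T'] J_mono[of T' T a] unfolding g_def by (auto intro: J_ge)
        then show "T' \<in> g ` {a..J a T}" by (metis image_eqI)
      qed
    qed
  qed
  have ord: "x \<le> y \<longleftrightarrow> g x \<subseteq> g y" if "x \<in> {a..J a T}" "y \<in> {a..J a T}" for x y
  proof
    assume "x \<le> y" then show "g x \<subseteq> g y" unfolding g_def by auto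
  next
    assume "g x \<subseteq> g y"
    then have "J a (g x) \<le> J a (g y)" by (rule J_mono)
    then show "x \<le> y" using decomp[OF T, of x] decomp[OF T, of y] that unfolding g_def by auto
  qed
  have hb: "bij_betw (image h) (Pow T) (Pow {..<card T})" using bij_betw_Pow[OF h] .
  have "bij_betw (image h \<circ> g) {a..J a T} (Pow {..<card T})"
    using bij_betw_trans[OF g_bij hb] .
  moreover have "x \<le> y \<longleftrightarrow> (image h \<circ> g) x \<subseteq> (image h \<circ> g) y"
    if "x \<in> {a..J a T}" "y \<in> {a..J a T}" for x y
  proof -
    have "g x \<subseteq> T" "g y \<subseteq> T" unfolding g_def by auto
    then have "g x \<subseteq> g y \<longleftrightarrow> h ` g x \<subseteq> h ` g y"
    proof (intro iffI)
      assume "h ` g x \<subseteq> h ` g y"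
      then show "g x \<subseteq> g y" using h \<open>g x \<subseteq> T\<close> \<open>g y \<subseteq> T\<close>
        unfolding bij_betw_def by (metis image_subset_iff inj_on_image_mem_iff subsetI subset_iff)
    qed auto
    then show ?thesis using ord[OF that] by simp
  qed
  ultimately show ?thesis unfolding iso_boolean_def by blast
qed

lemma boolean_interval_form:
  fixes a :: "'a::{finite,distrib_lattice}"
  assumes ab: "a \<le> b" and iso: "iso_boolean {a..b} k"
  shows "card {c. covers a c \<and> c \<le> b} = k \<and> b = J a {c. covers a c \<and> c \<le> b}"
proof -
  let ?S = "{a..b}"
  let ?T = "{c. covers a c \<and> c \<le> b}"
  obtain f where fb: "bij_betw f ?S (Pow {..<k})" and fo: "\<forall>x\<in>?S. \<forall>y\<in>?S. x \<le> y \<longleftrightarrow> f x \<subseteq> f y"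
    using iso unfolding iso_boolean_def by blast
  have fo': "x \<le> y \<longleftrightarrow> f x \<subseteq> f y" if "x \<in> ?S" "y \<in> ?S" for x y
    using fo that by blast
  have aS: "a \<in> ?S" and bS: "b \<in> ?S" using ab by auto
  have surj: "\<exists>x\<in>?S. f x = U" if "U \<subseteq> {..<k}" for U
    using fb that unfolding bij_betw_def by (metis Pow_iff imageE)
  have finj: "x = y" if "x \<in> ?S" "y \<in> ?S" "f x = f y" for x y
    using fb that unfolding bij_betw_def inj_on_def by blast
  have frange: "f x \<subseteq> {..<k}" if "x \<in> ?S" for x
    using fb that unfolding bij_betw_def by auto
  have fa: "f a = {}"
  proof -
    obtain x where "x \<in> ?S" "f x = {}" using surj[of "{}"] by auto
    then show ?thesis using fo'[OF aS \<open>x \<in> ?S\<close>] ab by auto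
  qed
  have fbk: "f b = {..<k}"
  proof -
    obtain x where "x \<in> ?S" "f x = {..<k}" using surj[of "{..<k}"] by auto
    then show ?thesis using fo'[OF \<open>x \<in> ?S\<close> bS] frange[OF bS] by auto
  qed
  have Tsing: "\<exists>i<k. f c = {i}" if c: "c \<in> ?T" for c
  proof -
    have cS: "c \<in> ?S" and ac: "a < c" using c unfolding covers_def by auto
    then have "f c \<noteq> {}" using fa finj[OF cS aS] by auto
    then obtain i where i: "i \<in> f c" by auto
    then have ik: "i < k" using frange[OF cS] by auto
    obtain y where y: "y \<in> ?S" "f y = {i}" using surj[of "{i}"] ik by auto
    have "y \<le> c" using fo'[OF y(1) cS] y i by auto
    moreover have "y \<noteq> a" using y fa by auto
    then have "a < y" using y by auto
    ultimately have "y = c" using c unfolding covers_def by (auto simp: order.order_iff_strict)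
    then show ?thesis using y ik by auto
  qed
  have singT: "\<exists>c\<in>?T. f c = {i}" if ik: "i < k" for i
  proof -
    obtain y where y: "y \<in> ?S" "f y = {i}" using surj[of "{i}"] ik by auto
    have "y \<noteq> a" using y fa by auto
    then have ay: "a < y" using y by auto
    have "covers a y"
      unfolding covers_def
    proof (intro conjI notI ay)
      assume "\<exists>z. a < z \<and> z < y"
      then obtain z where z: "a < z" "z < y" by auto
      then have zS: "z \<in> ?S" using y(1) by (simp add: less_imp_le)
      have "f z \<subseteq> {i}" using fo'[OF zS y(1)] y(2) z(2) by (simp add: less_imp_le)
      moreover have "f z \<noteq> {i}" using finj[OF zS y(1)] y(2) z(2) by auto
      ultimately have "f z = {}" by auto
      then have "z = a" using finj[OF zS aS] fa by auto
      then show False using z by auto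
    qed
    then show ?thesis using y by auto
  qed
  have TS: "?T \<subseteq> ?S" unfolding covers_def by auto
  have "f ` ?T = (\<lambda>i. {i}) ` {..<k}"
  proof
    show "f ` ?T \<subseteq> (\<lambda>i. {i}) ` {..<k}"
    proof
      fix U assume "U \<in> f ` ?T"
      then obtain c where "c \<in> ?T" "U = f c" by blast
      then show "U \<in> (\<lambda>i. {i}) ` {..<k}" using Tsing[of c] by blast
    qed
    show "(\<lambda>i. {i}) ` {..<k} \<subseteq> f ` ?T"
    proof
      fix U assume "U \<in> (\<lambda>i. {i}) ` {..<k}"
      then obtain i where "i < k" "U = {i}" by blast
      then show "U \<in> f ` ?T" using singT[of i] by (metis image_eqI)
    qed
  qed
  moreover have "inj_on f ?T" using fb inj_on_subset[OF _ TS] unfolding bij_betw_def by blast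
  ultimately have "card ?T = k"
  proof -
    assume e: "f ` ?T = (\<lambda>i. {i}) ` {..<k}" and inj: "inj_on f ?T"
    have "card ?T = card (f ` ?T)" using card_image[OF inj] by simp
    also have "\<dots> = card {..<k}" unfolding e by (rule card_image) (simp add: inj_on_def)
    finally show ?thesis by simp
  qed
  moreover have "b = J a ?T"
  proof -
    have JS: "J a ?T \<in> ?S" using ab by (auto intro: J_ge J_le)
    have "\<forall>i<k. i \<in> f (J a ?T)"
    proof (intro allI impI)
      fix i assume "i < k"
      then obtain c where c: "c \<in> ?T" "f c = {i}" using singT by blast
      then have "c \<le> J a ?T" by (auto intro: J_ge)
      then show "i \<in> f (J a ?T)" using fo'[of c "J a ?T"] JS TS c by auto
    qed
    then have "f b \<subseteq> f (J a ?T)" using fbk by auto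
    then have "b \<le> J a ?T" using fo'[OF bS JS] by auto
    then show ?thesis using JS by auto
  qed
  ultimately show ?thesis by auto
qed



lemma q_formula:
  fixes L :: "'a::{finite,distrib_lattice} itself"
  shows "q L k = (\<Sum>a\<in>(UNIV::'a set). deg_down a choose k)"
proof -
  define P where "P = (SIGMA a:(UNIV::'a set). {T. T \<subseteq> uc a \<and> card T = k})"
  define g where "g = (\<lambda>(a::'a, T). {a..J a T})"
  have eq: "{S :: 'a set. (\<exists>a b. a \<le> b \<and> S = {a..b}) \<and> iso_boolean S k} = g ` P"
  proof
    show "{S :: 'a set. (\<exists>a b. a \<le> b \<and> S = {a..b}) \<and> iso_boolean S k} \<subseteq> g ` P"
    proof
      fix S :: "'a set" assume "S \<in> {S. (\<exists>a b. a \<le> b \<and> S = {a..b}) \<and> iso_boolean S k}"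
      then obtain a b where ab: "a \<le> b" "S = {a..b}" and iso: "iso_boolean S k" by blast
      let ?T = "{c. covers a c \<and> c \<le> b}"
      have "card ?T = k" "b = J a ?T" using boolean_interval_form[OF ab(1)] iso ab(2) by auto
      then have "(a, ?T) \<in> P" "S = g (a, ?T)" unfolding P_def g_def using ab by auto
      then show "S \<in> g ` P" by blast
    qed
    show "g ` P \<subseteq> {S :: 'a set. (\<exists>a b. a \<le> b \<and> S = {a..b}) \<and> iso_boolean S k}"
    proof
      fix S assume "S \<in> g ` P"
      then obtain a T where aT: "T \<subseteq> uc a" "card T = k" "S = {a..J a T}"
        unfolding P_def g_def by auto
      then have "a \<le> J a T" by (auto intro: J_ge)
      then show "S \<in> {S :: 'a set. (\<exists>a b. a \<le> b \<and> S = {a..b}) \<and> iso_boolean S k}"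
        using interval_boolean[OF aT(1)] aT by auto
    qed
  qed
  have inj: "inj_on g P"
  proof (rule inj_onI)
    fix x y assume x: "x \<in> P" and y: "y \<in> P" and e: "g x = g y"
    obtain a T where xa: "x = (a, T)" "T \<subseteq> uc a" using x unfolding P_def by auto
    obtain a' T' where ya: "y = (a', T')" "T' \<subseteq> uc a'" using y unfolding P_def by auto
    have e2: "{a..J a T} = {a'..J a' T'}" using e unfolding xa ya g_def by (simp only: prod.case)
    have l1: "a \<le> J a T" "a' \<le> J a' T'" by (auto intro: J_ge)
    have m1: "a \<in> {a'..J a' T'}" "J a T \<in> {a'..J a' T'}" using l1 unfolding e2[symmetric] by simp_all
    have m2: "a' \<in> {a..J a T}" "J a' T' \<in> {a..J a T}" using l1 unfolding e2 by simp_all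
    have "a = a'" "J a T = J a' T'" using m1 m2 by (simp_all add: order.antisym)
    then have "T = T'" using covers_below_J[OF xa(2)] covers_below_J[OF ya(2)] by metis
    then show "x = y" using xa ya \<open>a = a'\<close> by simp
  qed
  have "q L k = card (g ` P)" unfolding q_def eq ..
  also have "\<dots> = card P" using card_image[OF inj] .
  also have "\<dots> = (\<Sum>a\<in>(UNIV::'a set). card {T. T \<subseteq> uc a \<and> card T = k})"
    unfolding P_def by (rule card_SigmaI) auto
  also have "\<dots> = (\<Sum>a\<in>(UNIV::'a set). deg_down a choose k)"
    unfolding deg_down_def by (rule sum.cong) (auto simp: n_subsets)
  finally show ?thesis .
qed



lemma exists_cover:
  fixes a :: "'a::{finite,order}"
  assumes "a < x" shows "\<exists>c. covers a c \<and> c \<le> x"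
proof -
  have "finite {z. a < z \<and> z \<le> x}" "{z. a < z \<and> z \<le> x} \<noteq> {}" using assms by auto
  from finite_has_minimal[OF this] obtain m where
    m: "a < m" "m \<le> x" "\<forall>z. a < z \<and> z \<le> x \<longrightarrow> z \<le> m \<longrightarrow> m = z" by auto
  have "covers a m" unfolding covers_def
  proof (intro conjI notI m(1))
    assume "\<exists>c. a < c \<and> c < m"
    then obtain z where "a < z" "z < m" by auto
    then show False using m by (metis less_le_not_le order.trans)
  qed
  then show ?thesis using m by auto
qed

lemma deg_zero_iff:
  fixes a :: "'a::{finite,lattice}"
  shows "deg_down a = 0 \<longleftrightarrow> (\<forall>x. x \<le> a)"
proof -
  have "deg_down a = 0 \<longleftrightarrow> uc a = {}" unfolding deg_down_def by simp
  also have "\<dots> \<longleftrightarrow> (\<forall>x. x \<le> a)"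
  proof
    assume e: "uc a = {}"
    show "\<forall>x. x \<le> a"
    proof (rule ccontr)
      assume "\<not> (\<forall>x. x \<le> a)"
      then obtain x where "\<not> x \<le> a" by auto
      then have "a < sup a x" by (metis sup.cobounded1 sup.cobounded2 order.not_eq_order_implies_strict)
      then show False using exists_cover[of a "sup a x"] e by auto
    qed
  next
    assume "\<forall>x. x \<le> a" then show "uc a = {}" unfolding covers_def by (metis (mono_tags) empty_Collect_eq less_le_not_le)
  qed
  finally show ?thesis .
qed

lemma d0_eq_1:
  fixes L :: "'a::{finite,lattice} itself"
  shows "d_down L 0 = 1"
proof -
  define t :: 'a where "t = Sup_fin UNIV"
  have tt: "\<forall>x. x \<le> t" unfolding t_def by (auto intro: Sup_fin.coboundedI)
  have "{a::'a. deg_down a = 0} = {t}"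
    using tt by (auto simp: deg_zero_iff intro: order.antisym)
  then show ?thesis unfolding d_down_def by simp
qed

lemma mi_iff_deg1:
  fixes a :: "'a::{finite,lattice}"
  shows "meet_irreducible a \<longleftrightarrow> deg_down a = 1"
proof
  assume mi: "meet_irreducible a"
  then have "\<not> (\<forall>x. x \<le> a)" unfolding meet_irreducible_def by auto
  then have "deg_down a \<noteq> 0" using deg_zero_iff by auto
  then obtain c where c: "covers a c" unfolding deg_down_def by (auto simp: card_eq_0_iff)
  have "uc a = {c}"
  proof
    show "uc a \<subseteq> {c}"
    proof
      fix c' assume c': "c' \<in> uc a"
      show "c' \<in> {c}"
      proof (rule ccontr)
        assume "c' \<notin> {c}"
        then have ne: "c' \<noteq> c" by auto
        have "inf c c' = a" using covers_distinct_inf[of a c c'] c c' ne by auto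
        then have "a = c \<or> a = c'" using mi unfolding meet_irreducible_def by metis
        then show False using c c' unfolding covers_def by auto
      qed
    qed
  qed (use c in auto)
  then show "deg_down a = 1" unfolding deg_down_def by simp
next
  assume "deg_down a = 1"
  then obtain c where uc: "uc a = {c}" unfolding deg_down_def by (auto simp: card_1_singleton_iff)
  then have c: "covers a c" by auto
  have above: "c \<le> x" if ax: "a < x" for x
  proof -
    obtain c' where "covers a c'" "c' \<le> x" using exists_cover[OF ax] by auto
    then show ?thesis using uc by auto
  qed
  show "meet_irreducible a" unfolding meet_irreducible_def
  proof (intro conjI allI impI)
    show "\<exists>b. \<not> b \<le> a" using c unfolding covers_def by (auto intro!: exI[of _ c])
    fix x y assume e: "a = inf x y"
    show "a = x \<or> a = y"
    proof (rule ccontr)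
      assume "\<not> (a = x \<or> a = y)"
      then have "a < x" "a < y" using e by (simp_all add: inf.strict_order_iff inf_commute inf_left_commute)
      then have "c \<le> inf x y" using above by auto
      then show False using e c unfolding covers_def by (metis less_le_not_le)
    qed
  qed
qed

lemma d1_eq_Mi:
  fixes L :: "'a::{finite,lattice} itself"
  shows "d_down L 1 = card (Mi :: 'a set)"
  unfolding d_down_def Mi_def using mi_iff_deg1 by metis



lemma deg_le_max:
  fixes L :: "'a::{finite,distrib_lattice} itself" and a :: 'a
  shows "deg_down a \<le> max_antichain_Mi L"
proof -
  define A where "A c = {x. a \<le> x \<and> \<not> c \<le> x}" for c
  define m where "m c = (SOME x. x \<in> A c \<and> (\<forall>y\<in>A c. x \<le> y \<longrightarrow> x = y))" for c
  have mprop: "m c \<in> A c \<and> (\<forall>y\<in>A c. m c \<le> y \<longrightarrow> m c = y)" if c: "c \<in> uc a" for c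
  proof -
    have "a \<in> A c" using c unfolding A_def covers_def by (auto simp: less_le_not_le)
    then have "A c \<noteq> {}" by auto
    from finite_has_maximal[OF _ this] have "\<exists>x. x \<in> A c \<and> (\<forall>y\<in>A c. x \<le> y \<longrightarrow> x = y)" by auto
    then show ?thesis unfolding m_def by (rule someI_ex)
  qed
  have mA: "a \<le> m c" "\<not> c \<le> m c" if "c \<in> uc a" for c using mprop[OF that] unfolding A_def by auto
  have mmax: "m c = y" if "c \<in> uc a" "a \<le> y" "\<not> c \<le> y" "m c \<le> y" for c y
    using mprop[OF that(1)] that unfolding A_def by auto
  have mi: "meet_irreducible (m c)" if c: "c \<in> uc a" for c
    unfolding meet_irreducible_def
  proof (intro conjI allI impI)
    show "\<exists>b. \<not> b \<le> m c" using mA[OF c] by auto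
    fix x y assume e: "m c = inf x y"
    show "m c = x \<or> m c = y"
    proof (rule ccontr)
      assume ne: "\<not> (m c = x \<or> m c = y)"
      have le: "m c \<le> x" "m c \<le> y" using e by simp_all
      have "a \<le> x" "a \<le> y" using mA[OF c] le by (auto intro: order.trans)
      then have "c \<le> x" "c \<le> y" using mmax[OF c] le ne by auto
      then have "c \<le> m c" using e by simp
      then show False using mA[OF c] by auto
    qed
  qed
  have cross: "c' \<le> m c" if c: "c \<in> uc a" and c': "c' \<in> uc a" and ne: "c \<noteq> c'" for c c'
  proof (cases "c \<le> sup (m c) c'")
    case False
    have "a \<le> sup (m c) c'" using mA[OF c] by (auto intro: le_supI1)
    then have "m c = sup (m c) c'" using mmax[OF c _ False] by simp
    then show ?thesis by (metis sup.cobounded2)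
  next
    case True
    have "c = inf c (sup (m c) c')" using True by (simp add: inf.absorb1)
    also have "\<dots> = sup (inf c (m c)) (inf c c')" by (rule inf_sup_distrib1)
    also have "inf c (m c) = a"
      using cover_inf[of a c "m c"] c mA[OF c] by (auto simp: inf_commute)
    also have "inf c c' = a" using covers_distinct_inf[of a c c'] c c' ne by auto
    finally have "c = a" by simp
    then show ?thesis using c unfolding covers_def by auto
  qed
  have inj: "inj_on m (uc a)"
  proof (rule inj_onI)
    fix c c' assume c: "c \<in> uc a" and c': "c' \<in> uc a" and e: "m c = m c'"
    show "c = c'"
    proof (rule ccontr)
      assume "c \<noteq> c'"
      then have "c' \<le> m c" using cross c c' by auto
      then show False using mA[OF c'] e by auto
    qed
  qed
  have anti: "antichain_in (m ` uc a)" unfolding antichain_in_def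
  proof (intro ballI impI)
    fix x y assume "x \<in> m ` uc a" "y \<in> m ` uc a" and xy: "x \<le> y"
    then obtain c c' where c: "c \<in> uc a" "x = m c" and c': "c' \<in> uc a" "y = m c'" by auto
    show "x = y"
    proof (cases "c = c'")
      case False
      then have "c' \<le> m c" using cross c c' by auto
      then have "c' \<le> m c'" using xy c c' by (auto intro: order.trans)
      then show ?thesis using mA[OF c'(1)] by auto
    qed (use c c' in auto)
  qed
  have sub: "m ` uc a \<subseteq> Mi" unfolding Mi_def using mi by auto
  have "deg_down a = card (m ` uc a)" unfolding deg_down_def using card_image[OF inj] by simp
  also have "\<dots> \<le> Max {card A | A :: 'a set. A \<subseteq> Mi \<and> antichain_in A}"
  proof (rule Max_ge)
    have "{card A | A :: 'a set. A \<subseteq> Mi \<and> antichain_in A} \<subseteq> card ` (UNIV :: 'a set set)" by auto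
    then show "finite {card A | A :: 'a set. A \<subseteq> Mi \<and> antichain_in A}"
      by (rule finite_subset) simp
    show "card (m ` uc a) \<in> {card A | A :: 'a set. A \<subseteq> Mi \<and> antichain_in A}"
      using sub anti by blast
  qed
  finally show ?thesis unfolding max_antichain_Mi_def .
qed



lemma pderiv_sum': "pderiv (sum f A) = (\<Sum>x\<in>A. pderiv (f x))"
  by (induction A rule: infinite_finite_induct) (simp_all add: pderiv_add)

lemma alt_sum0:
  assumes "d \<le> m"
  shows "(\<Sum>k\<le>m. (-1)^k * int (d choose k)) = (if d = 0 then 1 else 0)"
proof -
  have "(\<Sum>k\<le>m. (-1)^k * int (d choose k)) = (\<Sum>k\<le>d. (-1)^k * int (d choose k))"
    using assms by (intro sum.mono_neutral_right) auto
  also have "\<dots> = (if d = 0 then 1 else 0)"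
    using choose_alternating_sum[of d, where 'a=int] by auto
  finally show ?thesis .
qed

lemma alt_sum1:
  assumes "d \<le> m"
  shows "(\<Sum>k\<le>m. int k * int (d choose k) * (-1)^(k-1)) = (if d = 1 then 1 else 0)"
proof -
  have "(\<Sum>k\<le>m. int k * int (d choose k) * (-1)^(k-1)) = (\<Sum>k\<le>d. int k * int (d choose k) * (-1)^(k-1))"
    using assms by (intro sum.mono_neutral_right) auto
  also have "\<dots> = - (\<Sum>k\<le>d. (-1)^k * int k * int (d choose k))"
    unfolding sum_negf[symmetric]
  proof (rule sum.cong)
    fix k assume "k \<in> {..d}"
    show "int k * int (d choose k) * (-1)^(k-1) = - ((-1)^k * int k * int (d choose k))"
      by (cases k) auto
  qed simp
  also have "\<dots> = (if d = 1 then 1 else 0)"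
  proof (cases "d = 1")
    case True then show ?thesis by simp
  next
    case False then show ?thesis using choose_alternating_linear_sum[OF False, where 'a=int] by simp
  qed
  finally show ?thesis .
qed

lemma card_as_sum:
  fixes P :: "'a::finite \<Rightarrow> bool"
  shows "(\<Sum>a\<in>UNIV. (if P a then 1 else 0 :: int)) = int (card {a. P a})"
proof -
  have "(\<Sum>a\<in>UNIV. (if P a then 1 else 0 :: int)) = (\<Sum>a\<in>{x\<in>UNIV. P x}. 1)"
    by (rule sum.inter_filter[symmetric]) simp
  then show ?thesis by simp
qed

theorem corollary9:
  fixes L :: "'a::{finite, distrib_lattice} itself"
  shows "poly (Q_poly L) (-1) = (\<Sum>k\<le>max_antichain_Mi L. (-1)^k * int (q L k)) \<and>
         (\<Sum>k\<le>max_antichain_Mi L. (-1)^k * int (q L k)) = poly (D_poly L) 0 \<and>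
         poly (D_poly L) 0 = 1 \<and>
         poly (pderiv (Q_poly L)) (-1) = poly (pderiv (D_poly L)) 0 \<and>
         poly (pderiv (D_poly L)) 0 = int (d_down L 1) \<and>
         d_down L 1 = card (Mi :: 'a set)"
proof -
  define m where "m = max_antichain_Mi L"
  have dle: "deg_down (a::'a) \<le> m" for a unfolding m_def by (rule deg_le_max)
  have qf: "int (q L k) = (\<Sum>a\<in>(UNIV::'a set). int (deg_down a choose k))" for k
    by (simp add: q_formula)
  have e1: "poly (Q_poly L) (-1) = (\<Sum>k\<le>m. (-1)^k * int (q L k))"
    unfolding Q_poly_def m_def poly_sum poly_monom by (simp add: mult.commute)
  have e2: "(\<Sum>k\<le>m. (-1)^k * int (q L k)) = 1"
  proof -
    have "(\<Sum>k\<le>m. (-1)^k * int (q L k))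
        = (\<Sum>a\<in>(UNIV::'a set). \<Sum>k\<le>m. (-1)^k * int (deg_down a choose k))"
      unfolding qf sum_distrib_left by (rule sum.swap)
    also have "\<dots> = (\<Sum>a\<in>(UNIV::'a set). if deg_down a = 0 then 1 else 0)"
      using alt_sum0[OF dle] by simp
    also have "\<dots> = int (d_down L 0)" unfolding card_as_sum d_down_def ..
    finally show ?thesis using d0_eq_1[of L] by simp
  qed
  have e3: "poly (D_poly L) 0 = 1"
  proof -
    have "poly (D_poly L) 0 = (\<Sum>k\<le>m. int (d_down L k) * 0 ^ k)"
      unfolding D_poly_def m_def poly_sum poly_monom ..
    also have "\<dots> = (\<Sum>k\<le>m. if k = 0 then int (d_down L k) else 0)"
      by (rule sum.cong) auto
    also have "\<dots> = int (d_down L 0)" by (simp add: sum.delta)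
    finally show ?thesis using d0_eq_1[of L] by simp
  qed
  have e4: "poly (pderiv (Q_poly L)) (-1) = int (d_down L 1)"
  proof -
    have "poly (pderiv (Q_poly L)) (-1) = (\<Sum>k\<le>m. int k * int (q L k) * (-1)^(k-1))"
      unfolding Q_poly_def m_def pderiv_sum' pderiv_monom poly_sum poly_monom by simp
    also have "\<dots> = (\<Sum>a\<in>(UNIV::'a set). \<Sum>k\<le>m. int k * int (deg_down a choose k) * (-1)^(k-1))"
      unfolding qf sum_distrib_left sum_distrib_right by (rule sum.swap)
    also have "\<dots> = (\<Sum>a\<in>(UNIV::'a set). if deg_down a = 1 then 1 else 0)"
      using alt_sum1[OF dle] by simp
    also have "\<dots> = int (d_down L 1)" unfolding card_as_sum d_down_def ..
    finally show ?thesis .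
  qed
  have e5: "poly (pderiv (D_poly L)) 0 = int (d_down L 1)"
  proof -
    have "poly (pderiv (D_poly L)) 0 = (\<Sum>k\<le>m. int k * int (d_down L k) * 0^(k-1))"
      unfolding D_poly_def m_def pderiv_sum' pderiv_monom poly_sum poly_monom by simp
    also have "\<dots> = (\<Sum>k\<le>m. if k = 1 then int (d_down L 1) else 0)"
      by (rule sum.cong) auto
    also have "\<dots> = int (d_down L 1)"
    proof (cases "m = 0")
      case True
      have n1: "deg_down a \<noteq> 1" for a :: 'a using dle[of a] True by simp
      have "{a::'a. deg_down a = 1} = {}" using n1 by simp
      then show ?thesis using True unfolding d_down_def by simp
    qed (simp add: sum.delta)
    finally show ?thesis .
  qed
  show ?thesis using e1 e2 e3 e4 e5 d1_eq_Mi[of L] unfolding m_def by simp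
qed


end
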